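(* Let $\mathcal{X}=\{x_1,\dots,x_N\}$, $\Theta=\{\theta_1,\dots,\theta_M\}$, $\mathcal{A}$ be finite, let $\hat v_D,\hat v_U:\mathcal{X}\times\Theta\times\mathcal{A}\to\mathbb{R}$ be given (modulated) utilities, $b_D(\cdot|x)\in\Delta\Theta$ for $x\in\mathcal{X}$, and $\mathcal{S}=\{s_{\{a^1,\dots,a^M\}}:a^l\in\mathcal{A}\}$. For a common prior $\mathbf p\in\Delta\mathcal{X}$ (held by the defender and all user types), call $\pi:\mathcal{X}\to\Delta\mathcal{S}$ credible at $\mathbf p$ if $\sum_{x}[\hat v_U(x,\theta_l,a^l)-\hat v_U(x,\theta_l,a^h)]\pi(s_{\{a^1,\dots,a^M\}}|x)\mathbf p(x)\ge0$ for all $s_{\{a^1,\dots,a^M\}}\in\mathcal{S}$, $a^h\in\mathcal{A}$, $l$; set $$\bar v_D(\pi,\mathbf p)=\sum_x\mathbf p(x)\sum_{s_{\{a^1,\dots,a^M\}}}\pi(s_{\{a^1,\dots,a^M\}}|x)\sum_{l=1}^M b_D(\theta_l|x)\hat v_D(x,\theta_l,a^l),$$ let $V_D(\mathbf p)$ be the maximum of $\bar v_D(\pi,\mathbf p)$ over credible $\pi$, and let $\tilde v_D(\mathbf p)$ be the maximum of $\bar v_D(\pi,\mathbf p)$ over credible zero-information $\pi$ (i.e. $\pi(s|x)=\pi(s|x')$ for all $s,x,x'$). Then there exists $\mathbf p^0_g\in\Delta\mathcal{X}$ maximizing $\tilde v_D$ over $\Delta\mathcal{X}$, and for any such $\mathbf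 p^0_g$ it also maximizes $V_D$ over $\Delta\mathcal{X}$ with $\tilde v_D(\mathbf p^0_g)=V_D(\mathbf p^0_g)=\max_{\mathbf p\in\Delta\mathcal{X}}V_D(\mathbf p)$. Consequently, the optimal value of the joint choice of the common prior $\mathbf p\in\Delta\mathcal{X}$ and a credible generator at $\mathbf p$ does not depend on the original initial belief, and it is attained by choosing $\mathbf p=\mathbf p^0_g$ together with a zero-information generator.
   Context: Defender–user game with an overt trust manipulator: the defender may choose the common initial belief over the state that both she and all user types hold; the modulator (utility transfer) is fixed and already incorporated into $\hat v_D,\hat v_U$. A signal $s_{\{a^1,\dots,a^M\}}$ prescribes action $a^l$ to type $\theta_l$. *)

theory Defs
  imports "HOL-Analysis.Analysis"
begin

(* A signal s_{a^1,...,a^M} is a function 't => 'a assigning action s l to type l;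
   the signal space S is therefore UNIV :: ('t => 'a) set. *)

definition dist_simplex :: "('x::finite \<Rightarrow> real) set" where
  "dist_simplex = {p. (\<forall>x. 0 \<le> p x) \<and> (\<Sum>x\<in>UNIV. p x) = 1}"

(* pi x s = pi(s | x); a generator maps each state to a distribution over signals *)
definition generator :: "('x::finite \<Rightarrow> ('t::finite \<Rightarrow> 'a::finite) \<Rightarrow> real) \<Rightarrow> bool" where
  "generator \<pi> \<longleftrightarrow> (\<forall>x. \<pi> x \<in> dist_simplex)"

definition credible ::
  "('x::finite \<Rightarrow> 't::finite \<Rightarrow> 'a::finite \<Rightarrow> real) \<Rightarrow> ('x \<Rightarrow> real)
     \<Rightarrow> ('x \<Rightarrow> ('t \<Rightarrow> 'a) \<Rightarrow> real) \<Rightarrow> bool" where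
  "credible vU p \<pi> \<longleftrightarrow>
     (\<forall>s ah l. (\<Sum>x\<in>UNIV. (vU x l (s l) - vU x l ah) * \<pi> x s * p x) \<ge> 0)"

definition zero_info :: "('x \<Rightarrow> ('t \<Rightarrow> 'a) \<Rightarrow> real) \<Rightarrow> bool" where
  "zero_info \<pi> \<longleftrightarrow> (\<forall>s x x'. \<pi> x s = \<pi> x' s)"

definition vbar ::
  "('x::finite \<Rightarrow> 't::finite \<Rightarrow> 'a::finite \<Rightarrow> real) \<Rightarrow> ('x \<Rightarrow> 't \<Rightarrow> real)
     \<Rightarrow> ('x \<Rightarrow> ('t \<Rightarrow> 'a) \<Rightarrow> real) \<Rightarrow> ('x \<Rightarrow> real) \<Rightarrow> real" where
  "vbar vD bD \<pi> p =
     (\<Sum>x\<in>UNIV. p x * (\<Sum>s\<in>UNIV. \<pi> x s * (\<Sum>l\<in>UNIV. bD x l * vD x l (s l))))"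

definition VD ::
  "('x::finite \<Rightarrow> 't::finite \<Rightarrow> 'a::finite \<Rightarrow> real) \<Rightarrow> ('x \<Rightarrow> 't \<Rightarrow> 'a \<Rightarrow> real)
     \<Rightarrow> ('x \<Rightarrow> 't \<Rightarrow> real) \<Rightarrow> ('x \<Rightarrow> real) \<Rightarrow> real" where
  "VD vD vU bD p = Sup {vbar vD bD \<pi> p | \<pi>. generator \<pi> \<and> credible vU p \<pi>}"

definition VD0 ::
  "('x::finite \<Rightarrow> 't::finite \<Rightarrow> 'a::finite \<Rightarrow> real) \<Rightarrow> ('x \<Rightarrow> 't \<Rightarrow> 'a \<Rightarrow> real)
     \<Rightarrow> ('x \<Rightarrow> 't \<Rightarrow> real) \<Rightarrow> ('x \<Rightarrow> real) \<Rightarrow> real" where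
  "VD0 vD vU bD p =
     Sup {vbar vD bD \<pi> p | \<pi>. generator \<pi> \<and> zero_info \<pi> \<and> credible vU p \<pi>}"

end

theory Submission
  imports Defs
begin

definition wD :: "('x::finite \<Rightarrow> 't::finite \<Rightarrow> 'a::finite \<Rightarrow> real) \<Rightarrow> ('x \<Rightarrow> 't \<Rightarrow> real) \<Rightarrow> ('t \<Rightarrow> 'a) \<Rightarrow> 'x \<Rightarrow> real" where
  "wD vD bD s x = (\<Sum>l\<in>UNIV. bD x l * vD x l (s l))"

definition gD where "gD vD bD s p = (\<Sum>x\<in>UNIV. p x * wD vD bD s x)"

definition obed :: "('x::finite \<Rightarrow> 't::finite \<Rightarrow> 'a::finite \<Rightarrow> real) \<Rightarrow> ('t \<Rightarrow> 'a) \<Rightarrow> ('x \<Rightarrow> real) \<Rightarrow> bool" where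
  "obed vU s p \<longleftrightarrow> (\<forall>l ah. 0 \<le> (\<Sum>x\<in>UNIV. (vU x l (s l) - vU x l ah) * p x))"

definition delta :: "('t \<Rightarrow> 'a) \<Rightarrow> 'x \<Rightarrow> ('t \<Rightarrow> 'a) \<Rightarrow> real" where
  "delta s = (\<lambda>x t. if t = s then 1 else 0)"

lemma obed_exists:
  fixes vU :: "'x::finite \<Rightarrow> 't::finite \<Rightarrow> 'a::finite \<Rightarrow> real"
  shows "\<exists>s. obed vU s p"
proof -
  have "\<forall>l. \<exists>a. \<forall>b. (\<Sum>x\<in>UNIV. p x * vU x l b) \<le> (\<Sum>x\<in>UNIV. p x * vU x l a)"
  proof
    fix l
    let ?f = "\<lambda>b. (\<Sum>x\<in>UNIV. p x * vU x l b)"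
    have "Max (range ?f) \<in> range ?f" by (rule Max_in) auto
    then obtain a where a: "Max (range ?f) = ?f a" by (rule imageE)
    have "\<forall>b. ?f b \<le> ?f a"
    proof
      fix b
      have "?f b \<le> Max (range ?f)" by (rule Max_ge) auto
      then show "?f b \<le> ?f a" by (simp only: a)
    qed
    then show "\<exists>a. \<forall>b. ?f b \<le> ?f a" by (rule exI)
  qed
  then have "\<exists>s. \<forall>l. \<forall>b. (\<Sum>x\<in>UNIV. p x * vU x l b) \<le> (\<Sum>x\<in>UNIV. p x * vU x l (s l))"
    by (rule choice)
  then obtain s where s: "\<And>l b. (\<Sum>x\<in>UNIV. p x * vU x l b) \<le> (\<Sum>x\<in>UNIV. p x * vU x l (s l))"
    by blast
  have "obed vU s p"
    unfolding obed_def
  proof (intro allI)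
    fix l ah
    have "(\<Sum>x\<in>UNIV. (vU x l (s l) - vU x l ah) * p x) = (\<Sum>x\<in>UNIV. p x * vU x l (s l)) - (\<Sum>x\<in>UNIV. p x * vU x l ah)"
      by (simp only: sum_subtractf[symmetric] right_diff_distrib mult.commute)
    then show "0 \<le> (\<Sum>x\<in>UNIV. (vU x l (s l) - vU x l ah) * p x)" using s[of l ah] by linarith
  qed
  then show ?thesis by blast
qed

lemma simplex_ne: "\<exists>p. p \<in> (dist_simplex :: ('x::finite \<Rightarrow> real) set)"
proof -
  have "(\<lambda>x::'x. 1 / real CARD('x)) \<in> dist_simplex"
    unfolding dist_simplex_def by simp
  then show ?thesis by blast
qed

lemma sum_ind: "(\<Sum>t\<in>(UNIV::'b::finite set). (if t = s then 1 else 0) * (F t::real)) = F s"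
proof -
  have "(\<Sum>t\<in>(UNIV::'b set). (if t = s then 1 else 0) * F t) = (\<Sum>t\<in>UNIV. if t = s then F t else 0)"
    by (rule sum.cong) auto
  also have "... = F s" by (simp add: sum.delta)
  finally show ?thesis .
qed

lemma delta_gen: "generator (delta s)"
  unfolding generator_def dist_simplex_def delta_def by simp

lemma delta_zi: "zero_info (delta s)"
  unfolding zero_info_def delta_def by simp

lemma delta_cred: "obed vU s p \<Longrightarrow> credible vU p (delta s)"
  unfolding credible_def
  proof (intro allI)
    fix s' ah l assume ob: "obed vU s p"
    show "0 \<le> (\<Sum>x\<in>UNIV. (vU x l (s' l) - vU x l ah) * delta s x s' * p x)"
    proof (cases "s' = s")
      case True
      have d1: "delta s x s = 1" for x unfolding delta_def by simp
      have eq: "(\<Sum>x\<in>UNIV. (vU x l (s' l) - vU x l ah) * delta s x s' * p x) = (\<Sum>x\<in>UNIV. (vU x l (s l) - vU x l ah) * p x)"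
        unfolding True by (simp only: d1 mult_1_right)
      have "0 \<le> (\<Sum>x\<in>UNIV. (vU x l (s l) - vU x l ah) * p x)" using ob unfolding obed_def by blast
      then show ?thesis by (simp only: eq)
    next
      case False
      then show ?thesis unfolding delta_def by simp
    qed
  qed

lemma delta_vbar: "vbar vD bD (delta s) p = gD vD bD s p"
  proof -
    have eq: "(\<Sum>sa\<in>UNIV. delta s x sa * (\<Sum>l\<in>UNIV. bD x l * vD x l (sa l))) = wD vD bD s x" for x
    proof -
      have "(\<Sum>t\<in>UNIV. delta s x t * wD vD bD t x) = wD vD bD s x"
        unfolding delta_def by (rule sum_ind)
      then show ?thesis unfolding wD_def .
    qed
    show ?thesis unfolding vbar_def gD_def eq ..
  qed


lemma per_s:
  fixes vD vU :: "'x::finite \<Rightarrow> 't::finite \<Rightarrow> 'a::finite \<Rightarrow> real" and bD :: "'x \<Rightarrow> 't \<Rightarrow> real"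
  assumes ex: "\<exists>p. p \<in> dist_simplex \<and> obed vU s p"
  shows "\<exists>p. p \<in> dist_simplex \<and> obed vU s p \<and> (\<forall>p'. p' \<in> dist_simplex \<and> obed vU s p' \<longrightarrow> gD vD bD s p' \<le> gD vD bD s p)"
proof -
  define K where "K = {v::real^'x. (\<forall>x. 0 \<le> v$x) \<and> (\<Sum>x\<in>UNIV. v$x) = 1 \<and> (\<forall>l ah. 0 \<le> (\<Sum>x\<in>UNIV. (vU x l (s l) - vU x l ah) * v$x))}"
  have memK: "v \<in> K \<longleftrightarrow> vec_nth v \<in> dist_simplex \<and> obed vU s (vec_nth v)" for v
    unfolding K_def dist_simplex_def obed_def by simp
  have cl: "closed K"
    unfolding K_def
    by (intro closed_Collect_conj closed_Collect_all closed_Collect_le closed_Collect_eq continuous_intros)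
  have bd: "bounded K"
  proof -
    have "K \<subseteq> cball 0 1"
    proof
      fix v assume v: "v \<in> K"
      have "norm v \<le> (\<Sum>i\<in>UNIV. \<bar>v $ i\<bar>)" by (rule norm_le_l1_cart)
      also have "\<dots> = (\<Sum>i\<in>UNIV. v $ i)" using v unfolding K_def by simp
      also have "\<dots> = 1" using v unfolding K_def by simp
      finally show "v \<in> cball 0 1" by simp
    qed
    then show ?thesis using bounded_cball bounded_subset by blast
  qed
  have cp: "compact K" using cl bd by (simp add: compact_eq_bounded_closed)
  obtain p1 where p1: "p1 \<in> dist_simplex" "obed vU s p1" using ex by blast
  have inv: "vec_nth (vec_lambda q) = q" for q :: "'x \<Rightarrow> real" by (rule ext) simp
  have "vec_lambda p1 \<in> K" using p1 memK inv by simp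
  then have ne: "K \<noteq> {}" by blast
  have ct: "continuous_on K (\<lambda>v. \<Sum>x\<in>UNIV. v $ x * wD vD bD s x)"
    by (intro continuous_intros)
  obtain v0 where v0: "v0 \<in> K" "\<And>v. v \<in> K \<Longrightarrow> (\<Sum>x\<in>UNIV. v $ x * wD vD bD s x) \<le> (\<Sum>x\<in>UNIV. v0 $ x * wD vD bD s x)"
    using continuous_attains_sup[OF cp ne ct] by blast
  show ?thesis
  proof (intro exI conjI allI impI)
    show "vec_nth v0 \<in> dist_simplex" "obed vU s (vec_nth v0)" using v0(1) memK by auto
    fix p' assume p': "p' \<in> dist_simplex \<and> obed vU s p'"
    then have "vec_lambda p' \<in> K" using memK inv by simp
    from v0(2)[OF this] show "gD vD bD s p' \<le> gD vD bD s (vec_nth v0)"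
      unfolding gD_def by simp
  qed
qed


lemma best_exists:
  fixes vD vU :: "'x::finite \<Rightarrow> 't::finite \<Rightarrow> 'a::finite \<Rightarrow> real" and bD :: "'x \<Rightarrow> 't \<Rightarrow> real"
  shows "\<exists>s p. p \<in> dist_simplex \<and> obed vU s p \<and> (\<forall>s' p'. p' \<in> dist_simplex \<and> obed vU s' p' \<longrightarrow> gD vD bD s' p' \<le> gD vD bD s p)"
proof -
  have "\<forall>s. \<exists>p. (\<exists>q. q \<in> dist_simplex \<and> obed vU s q) \<longrightarrow>
      (p \<in> dist_simplex \<and> obed vU s p \<and> (\<forall>p'. p' \<in> dist_simplex \<and> obed vU s p' \<longrightarrow> gD vD bD s p' \<le> gD vD bD s p))"
  proof
    fix s
    show "\<exists>p. (\<exists>q. q \<in> dist_simplex \<and> obed vU s q) \<longrightarrow>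
      (p \<in> dist_simplex \<and> obed vU s p \<and> (\<forall>p'. p' \<in> dist_simplex \<and> obed vU s p' \<longrightarrow> gD vD bD s p' \<le> gD vD bD s p))"
    proof (cases "\<exists>q. q \<in> dist_simplex \<and> obed vU s q")
      case True
      then show ?thesis using per_s[OF True, of vD bD] by blast
    next
      case False
      then show ?thesis by blast
    qed
  qed
  then obtain P where P: "\<And>s. (\<exists>q. q \<in> dist_simplex \<and> obed vU s q) \<Longrightarrow>
      P s \<in> dist_simplex \<and> obed vU s (P s) \<and> (\<forall>p'. p' \<in> dist_simplex \<and> obed vU s p' \<longrightarrow> gD vD bD s p' \<le> gD vD bD s (P s))"
    by metis
  define Sn where "Sn = {s. \<exists>q. q \<in> dist_simplex \<and> obed vU s q}"
  define h where "h s = gD vD bD s (P s)" for s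
  obtain p1 :: "'x \<Rightarrow> real" where p1: "p1 \<in> dist_simplex" using simplex_ne by blast
  obtain s1 where "obed vU s1 p1" using obed_exists by blast
  then have "s1 \<in> Sn" unfolding Sn_def using p1 by blast
  then have ne: "h ` Sn \<noteq> {}" by blast
  have fin: "finite (h ` Sn)" by simp
  have "Max (h ` Sn) \<in> h ` Sn" using Max_in[OF fin ne] .
  then obtain s0 where s0: "s0 \<in> Sn" "Max (h ` Sn) = h s0" by (rule imageE)
  have Ps0: "P s0 \<in> dist_simplex \<and> obed vU s0 (P s0)" using P s0(1) unfolding Sn_def by blast
  show ?thesis
  proof (intro exI conjI allI impI)
    show "P s0 \<in> dist_simplex" "obed vU s0 (P s0)" using Ps0 by auto
    fix s' p' assume sp: "p' \<in> dist_simplex \<and> obed vU s' p'"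
    then have s'S: "s' \<in> Sn" unfolding Sn_def by blast
    then have "gD vD bD s' p' \<le> h s'" unfolding h_def using P sp unfolding Sn_def by blast
    also have "h s' \<le> Max (h ` Sn)" using fin s'S by (intro Max_ge) auto
    also have "\<dots> = gD vD bD s0 (P s0)" using s0(2) unfolding h_def .
    finally show "gD vD bD s' p' \<le> gD vD bD s0 (P s0)" .
  qed
qed

lemma bound_all:
  fixes vD vU :: "'x::finite \<Rightarrow> 't::finite \<Rightarrow> 'a::finite \<Rightarrow> real" and bD :: "'x \<Rightarrow> 't \<Rightarrow> real"
  assumes M: "\<forall>s p. p \<in> dist_simplex \<and> obed vU s p \<longrightarrow> gD vD bD s p \<le> M"
    and p: "p \<in> dist_simplex" and g: "generator \<pi>" and c: "credible vU p \<pi>"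
  shows "vbar vD bD \<pi> p \<le> M"
proof -
  define m where "m s = (\<Sum>x\<in>UNIV. p x * \<pi> x s)" for s
  have pnn: "0 \<le> p x" for x using p unfolding dist_simplex_def by blast
  have pinn: "0 \<le> \<pi> x s" for x s using g unfolding generator_def dist_simplex_def by blast
  have pisum: "(\<Sum>s\<in>UNIV. \<pi> x s) = 1" for x using g unfolding generator_def dist_simplex_def by blast
  have psum: "(\<Sum>x\<in>UNIV. p x) = 1" using p unfolding dist_simplex_def by blast
  have nn: "0 \<le> p x * \<pi> x s" for x s using pnn pinn by (rule mult_nonneg_nonneg)
  have each: "(\<Sum>x\<in>UNIV. p x * \<pi> x s * wD vD bD s x) \<le> m s * M" for s
  proof -
    have m0: "0 \<le> m s" unfolding m_def using nn by (intro sum_nonneg) 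
    show ?thesis
    proof (cases "m s = 0")
      case True
      then have "\<forall>x\<in>UNIV. p x * \<pi> x s = 0" unfolding m_def using nn
        by (subst sum_nonneg_eq_0_iff[symmetric]) auto
      then have "(\<Sum>x\<in>UNIV. p x * \<pi> x s * wD vD bD s x) = 0" by (intro sum.neutral) simp
      then show ?thesis using True by simp
    next
      case False
      then have mpos: "0 < m s" using m0 by linarith
      define \<mu> where "\<mu> x = p x * \<pi> x s / m s" for x
      have "\<mu> \<in> dist_simplex"
        unfolding dist_simplex_def
      proof (intro CollectI conjI allI)
        show "0 \<le> \<mu> x" for x unfolding \<mu>_def using nn mpos by simp
        have "(\<Sum>x\<in>UNIV. \<mu> x) = m s / m s" unfolding \<mu>_def m_def by (simp only: sum_divide_distrib)
        then show "(\<Sum>x\<in>UNIV. \<mu> x) = 1" using mpos by simp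
      qed
      moreover have "obed vU s \<mu>"
        unfolding obed_def
      proof (intro allI)
        fix l ah
        have "(\<Sum>x\<in>UNIV. (vU x l (s l) - vU x l ah) * \<mu> x) = (\<Sum>x\<in>UNIV. (vU x l (s l) - vU x l ah) * \<pi> x s * p x) / m s"
          unfolding \<mu>_def sum_divide_distrib by (rule sum.cong) (simp_all add: mult_ac)
        moreover have "0 \<le> (\<Sum>x\<in>UNIV. (vU x l (s l) - vU x l ah) * \<pi> x s * p x)"
          using c unfolding credible_def by blast
        ultimately show "0 \<le> (\<Sum>x\<in>UNIV. (vU x l (s l) - vU x l ah) * \<mu> x)"
          using mpos by simp
      qed
      ultimately have "gD vD bD s \<mu> \<le> M" using M by blast
      moreover have "gD vD bD s \<mu> = (\<Sum>x\<in>UNIV. p x * \<pi> x s * wD vD bD s x) / m s"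
        unfolding gD_def \<mu>_def sum_divide_distrib by (rule sum.cong) auto
      ultimately show ?thesis using mpos by (simp add: pos_divide_le_eq mult.commute)
    qed
  qed
  have "vbar vD bD \<pi> p = (\<Sum>x\<in>UNIV. \<Sum>s\<in>UNIV. p x * \<pi> x s * wD vD bD s x)"
    unfolding vbar_def wD_def by (simp add: sum_distrib_left mult.assoc)
  also have "\<dots> = (\<Sum>s\<in>UNIV. \<Sum>x\<in>UNIV. p x * \<pi> x s * wD vD bD s x)" by (rule sum.swap)
  also have "\<dots> \<le> (\<Sum>s\<in>UNIV. m s * M)" by (rule sum_mono) (rule each)
  also have "\<dots> = (\<Sum>s\<in>UNIV. m s) * M"
    by (rule sum_distrib_right[symmetric])
  also have "(\<Sum>s\<in>UNIV. m s) = (\<Sum>s\<in>UNIV. \<Sum>x\<in>UNIV. p x * \<pi> x s)"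
    unfolding m_def ..
  also have "\<dots> = (\<Sum>x\<in>UNIV. \<Sum>s\<in>UNIV. p x * \<pi> x s)"
    by (rule sum.swap)
  also have "\<dots> = (\<Sum>x\<in>UNIV. p x * (\<Sum>s\<in>UNIV. \<pi> x s))"
    by (simp only: sum_distrib_left)
  also have "(\<Sum>x\<in>UNIV. p x * (\<Sum>s\<in>UNIV. \<pi> x s)) * M = M" using pisum psum by simp
  finally show ?thesis .
qed


lemma zero_bound:
  fixes vD vU :: "'x::finite \<Rightarrow> 't::finite \<Rightarrow> 'a::finite \<Rightarrow> real" and bD :: "'x \<Rightarrow> 't \<Rightarrow> real"
  assumes p: "p \<in> dist_simplex"
  shows "\<exists>s. obed vU s p \<and> (\<forall>\<pi>. generator \<pi> \<and> zero_info \<pi> \<and> credible vU p \<pi> \<longrightarrow> vbar vD bD \<pi> p \<le> gD vD bD s p)"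
proof -
  define Sp where "Sp = {s. obed vU s p}"
  define h where "h s = gD vD bD s p" for s
  obtain s1 where "obed vU s1 p" using obed_exists by blast
  then have "s1 \<in> Sp" unfolding Sp_def by blast
  then have ne: "h ` Sp \<noteq> {}" by blast
  have fin: "finite (h ` Sp)" by simp
  have "Max (h ` Sp) \<in> h ` Sp" using Max_in[OF fin ne] .
  then obtain s0 where s0: "s0 \<in> Sp" "Max (h ` Sp) = h s0" by (rule imageE)
  have G: "obed vU s p \<Longrightarrow> gD vD bD s p \<le> gD vD bD s0 p" for s
  proof -
    assume "obed vU s p"
    then have "s \<in> Sp" unfolding Sp_def by blast
    then have "h s \<le> Max (h ` Sp)" using fin by (intro Max_ge) auto
    then show ?thesis using s0(2) unfolding h_def by simp
  qed
  show ?thesis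
  proof (intro exI conjI allI impI)
    show "obed vU s0 p" using s0(1) unfolding Sp_def by blast
    fix \<pi> assume a: "generator \<pi> \<and> zero_info \<pi> \<and> credible vU p \<pi>"
    define \<sigma> where "\<sigma> = \<pi> undefined"
    have pix: "\<pi> x = \<sigma>" for x
    proof
      fix s show "\<pi> x s = \<sigma> s" using a unfolding zero_info_def \<sigma>_def by blast
    qed
    have snn: "0 \<le> \<sigma> s" for s using a unfolding generator_def dist_simplex_def \<sigma>_def by blast
    have ssum: "(\<Sum>s\<in>UNIV. \<sigma> s) = 1" using a unfolding generator_def dist_simplex_def \<sigma>_def by blast
    have each: "\<sigma> s * gD vD bD s p \<le> \<sigma> s * gD vD bD s0 p" for s
    proof (cases "\<sigma> s = 0")
      case True then show ?thesis by simp
    next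
      case False
      then have spos: "0 < \<sigma> s" using snn[of s] by linarith
      have "obed vU s p" unfolding obed_def
      proof (intro allI)
        fix l ah
        have "0 \<le> (\<Sum>x\<in>UNIV. (vU x l (s l) - vU x l ah) * \<pi> x s * p x)"
          using a unfolding credible_def by blast
        also have "(\<Sum>x\<in>UNIV. (vU x l (s l) - vU x l ah) * \<pi> x s * p x)
            = \<sigma> s * (\<Sum>x\<in>UNIV. (vU x l (s l) - vU x l ah) * p x)"
          unfolding pix sum_distrib_left by (rule sum.cong) (simp_all add: mult_ac)
        finally show "0 \<le> (\<Sum>x\<in>UNIV. (vU x l (s l) - vU x l ah) * p x)"
          using spos by (simp add: zero_le_mult_iff)
      qed
      then have "gD vD bD s p \<le> gD vD bD s0 p" by (rule G)
      then show ?thesis using snn[of s] by (rule mult_left_mono)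
    qed
    have "vbar vD bD \<pi> p = (\<Sum>x\<in>UNIV. \<Sum>s\<in>UNIV. \<sigma> s * (p x * wD vD bD s x))"
      unfolding vbar_def wD_def pix by (simp add: sum_distrib_left mult_ac)
    also have "\<dots> = (\<Sum>s\<in>UNIV. \<Sum>x\<in>UNIV. \<sigma> s * (p x * wD vD bD s x))" by (rule sum.swap)
    also have "\<dots> = (\<Sum>s\<in>UNIV. \<sigma> s * gD vD bD s p)"
      unfolding gD_def by (simp only: sum_distrib_left)
    also have "\<dots> \<le> (\<Sum>s\<in>UNIV. \<sigma> s * gD vD bD s0 p)" by (rule sum_mono) (rule each)
    also have "\<dots> = (\<Sum>s\<in>UNIV. \<sigma> s) * gD vD bD s0 p" by (rule sum_distrib_right[symmetric])
    also have "\<dots> = gD vD bD s0 p" using ssum by simp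
    finally show "vbar vD bD \<pi> p \<le> gD vD bD s0 p" .
  qed
qed


theorem theorem3:
  fixes vD vU :: "'x::finite \<Rightarrow> 't::finite \<Rightarrow> 'a::finite \<Rightarrow> real"
    and bD :: "'x \<Rightarrow> 't \<Rightarrow> real"
  assumes bD: "\<And>x. bD x \<in> dist_simplex"
  shows "(\<exists>p0\<in>dist_simplex. \<forall>p\<in>dist_simplex. VD0 vD vU bD p \<le> VD0 vD vU bD p0)
    \<and> (\<forall>p0\<in>dist_simplex. (\<forall>p\<in>dist_simplex. VD0 vD vU bD p \<le> VD0 vD vU bD p0) \<longrightarrow>
          (\<forall>p\<in>dist_simplex. VD vD vU bD p \<le> VD vD vU bD p0)
        \<and> VD0 vD vU bD p0 = VD vD vU bD p0
        \<and> (\<exists>\<pi>0. generator \<pi>0 \<and> zero_info \<pi>0 \<and> credible vU p0 \<pi>0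
               \<and> vbar vD bD \<pi>0 p0 = VD vD vU bD p0
               \<and> (\<forall>p\<in>dist_simplex. \<forall>\<pi>. generator \<pi> \<and> credible vU p \<pi>
                     \<longrightarrow> vbar vD bD \<pi> p \<le> vbar vD bD \<pi>0 p0)))"
proof -
  define A0 where "A0 p = {vbar vD bD \<pi> p | \<pi>. generator \<pi> \<and> zero_info \<pi> \<and> credible vU p \<pi>}" for p
  define A where "A p = {vbar vD bD \<pi> p | \<pi>. generator \<pi> \<and> credible vU p \<pi>}" for p
  have VD0e: "VD0 vD vU bD p = Sup (A0 p)" for p unfolding VD0_def A0_def ..
  have VDe: "VD vD vU bD p = Sup (A p)" for p unfolding VD_def A_def ..
  obtain ss ps where sp: "ps \<in> dist_simplex" "obed vU ss ps"
    and Mx: "\<forall>s' p'. p' \<in> dist_simplex \<and> obed vU s' p' \<longrightarrow> gD vD bD s' p' \<le> gD vD bD ss ps"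
    using best_exists[of vU vD bD] by blast
  define M where "M = gD vD bD ss ps"
  have bnd: "\<And>p \<pi>. p \<in> dist_simplex \<Longrightarrow> generator \<pi> \<Longrightarrow> credible vU p \<pi> \<Longrightarrow> vbar vD bD \<pi> p \<le> M"
    using bound_all Mx unfolding M_def by blast
  have sub: "A0 p \<subseteq> A p" for p unfolding A0_def A_def by blast
  have Abd: "\<forall>y\<in>A p. y \<le> M" if "p \<in> dist_simplex" for p
    unfolding A_def using bnd that by blast
  have bddA: "bdd_above (A p)" if "p \<in> dist_simplex" for p
    using Abd[OF that] by (intro bdd_aboveI[where M=M]) blast
  have bddA0: "bdd_above (A0 p)" if "p \<in> dist_simplex" for p
    using bddA[OF that] sub[of p] by (rule bdd_above_mono)
  have dmem: "gD vD bD s p \<in> A0 p" if "obed vU s p" for s p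
  proof -
    have "vbar vD bD (delta s) p \<in> A0 p" unfolding A0_def
      using delta_gen delta_zi delta_cred[OF that] by blast
    then show ?thesis by (simp only: delta_vbar)
  qed
  have ne0: "A0 p \<noteq> {}" for p
  proof -
    obtain s where "obed vU s p" using obed_exists by blast
    then show ?thesis using dmem by blast
  qed
  have neA: "A p \<noteq> {}" for p using ne0 sub by blast
  have VDle: "VD vD vU bD p \<le> M" if "p \<in> dist_simplex" for p
    unfolding VDe using neA[of p] Abd[OF that] by (intro cSup_least) blast+
  have VD0le: "VD0 vD vU bD p \<le> VD vD vU bD p" if "p \<in> dist_simplex" for p
    unfolding VDe VD0e using ne0[of p] bddA[OF that] sub[of p] by (rule cSup_subset_mono)
  have Mps: "M \<le> VD0 vD vU bD ps"
    unfolding VD0e M_def by (rule cSup_upper[OF dmem[OF sp(2)] bddA0[OF sp(1)]])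
  show ?thesis
  proof (rule conjI)
    show "\<exists>p0\<in>dist_simplex. \<forall>p\<in>dist_simplex. VD0 vD vU bD p \<le> VD0 vD vU bD p0"
    proof (intro bexI ballI)
      fix p :: "'x \<Rightarrow> real" assume "p \<in> dist_simplex"
      then show "VD0 vD vU bD p \<le> VD0 vD vU bD ps" using VD0le VDle Mps by fastforce
    qed (rule sp(1))
  next
    show "\<forall>p0\<in>dist_simplex. (\<forall>p\<in>dist_simplex. VD0 vD vU bD p \<le> VD0 vD vU bD p0) \<longrightarrow>
          (\<forall>p\<in>dist_simplex. VD vD vU bD p \<le> VD vD vU bD p0)
        \<and> VD0 vD vU bD p0 = VD vD vU bD p0
        \<and> (\<exists>\<pi>0. generator \<pi>0 \<and> zero_info \<pi>0 \<and> credible vU p0 \<pi>0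
               \<and> vbar vD bD \<pi>0 p0 = VD vD vU bD p0
               \<and> (\<forall>p\<in>dist_simplex. \<forall>\<pi>. generator \<pi> \<and> credible vU p \<pi>
                     \<longrightarrow> vbar vD bD \<pi> p \<le> vbar vD bD \<pi>0 p0))"
    proof (intro ballI impI)
    fix p0 assume p0: "p0 \<in> dist_simplex" and mx: "\<forall>p\<in>dist_simplex. VD0 vD vU bD p \<le> VD0 vD vU bD p0"
    have "VD0 vD vU bD ps \<le> VD0 vD vU bD p0" using mx sp(1) by blast
    then have e0: "VD0 vD vU bD p0 = M" and e1: "VD vD vU bD p0 = M"
      using Mps VD0le[OF p0] VDle[OF p0] by linarith+
    have c1: "\<forall>p\<in>dist_simplex. VD vD vU bD p \<le> VD vD vU bD p0" using VDle e1 by simp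
    have c2: "VD0 vD vU bD p0 = VD vD vU bD p0" using e0 e1 by simp
    obtain s0 where s0: "obed vU s0 p0"
      and zb: "\<forall>\<pi>. generator \<pi> \<and> zero_info \<pi> \<and> credible vU p0 \<pi> \<longrightarrow> vbar vD bD \<pi> p0 \<le> gD vD bD s0 p0"
      using zero_bound[OF p0, of vU vD bD] by blast
    have "Sup (A0 p0) = gD vD bD s0 p0"
    proof (rule cSup_eq_maximum)
      show "gD vD bD s0 p0 \<in> A0 p0" by (rule dmem[OF s0])
      fix y assume "y \<in> A0 p0" then show "y \<le> gD vD bD s0 p0" unfolding A0_def using zb by blast
    qed
    then have gM: "gD vD bD s0 p0 = M" using e0 VD0e by simp
    have c3: "\<exists>\<pi>0. generator \<pi>0 \<and> zero_info \<pi>0 \<and> credible vU p0 \<pi>0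
               \<and> vbar vD bD \<pi>0 p0 = VD vD vU bD p0
               \<and> (\<forall>p\<in>dist_simplex. \<forall>\<pi>. generator \<pi> \<and> credible vU p \<pi>
                     \<longrightarrow> vbar vD bD \<pi> p \<le> vbar vD bD \<pi>0 p0)"
    proof (intro exI conjI ballI allI impI)
      show "generator (delta s0)" by (rule delta_gen)
      show "zero_info (delta s0)" by (rule delta_zi)
      show "credible vU p0 (delta s0)" by (rule delta_cred[OF s0])
      show "vbar vD bD (delta s0) p0 = VD vD vU bD p0" unfolding delta_vbar gM e1 ..
      fix p :: "'x \<Rightarrow> real" and \<pi> :: "'x \<Rightarrow> ('t \<Rightarrow> 'a) \<Rightarrow> real" assume "p \<in> dist_simplex" "generator \<pi> \<and> credible vU p \<pi>"
      then have "vbar vD bD \<pi> p \<le> M" using bnd by blast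
      then show "vbar vD bD \<pi> p \<le> vbar vD bD (delta s0) p0" unfolding delta_vbar gM .
    qed
    show "(\<forall>p\<in>dist_simplex. VD vD vU bD p \<le> VD vD vU bD p0)
        \<and> VD0 vD vU bD p0 = VD vD vU bD p0
        \<and> (\<exists>\<pi>0. generator \<pi>0 \<and> zero_info \<pi>0 \<and> credible vU p0 \<pi>0
               \<and> vbar vD bD \<pi>0 p0 = VD vD vU bD p0
               \<and> (\<forall>p\<in>dist_simplex. \<forall>\<pi>. generator \<pi> \<and> credible vU p \<pi>
                     \<longrightarrow> vbar vD bD \<pi> p \<le> vbar vD bD \<pi>0 p0))"
      using c1 c2 c3 by (rule conjI[OF _ conjI])
    qed
  qed
qed

end
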